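(* Let $\Lambda$ be a strongly connected finite $k$-graph and let $M$ be the Borel probability measure on $\Lambda^\infty$ with $M(Z(\lambda))=\rho(\Lambda)^{-d(\lambda)}x^\Lambda_{s(\lambda)}$ for all $\lambda\in\Lambda$. For $m,n\in\mathbb{N}^k$, \[M(\{x\in\Lambda^\infty:\sigma^m(x)=\sigma^n(x)\})=\begin{cases}1&\text{if }m-n\in\operatorname{Per}\Lambda,\\0&\text{otherwise.}\end{cases}\]
   Context: A $k$-graph is a countable category $\Lambda$ with a functor $d:\Lambda\to\mathbb{N}^k$ such that whenever $d(\lambda)=m+n$ there are unique $\mu,\nu$ with $d(\mu)=m$, $d(\nu)=n$, $\lambda=\mu\nu$. $\Lambda^n=d^{-1}(n)$, $\Lambda^0$ = vertices, $r,s$ range and source. Standing convention: $\Lambda^{e_i}\neq\emptyset$ for each $i$. Finite: each $\Lambda^n$ finite; strongly connected: $v\Lambda w\neq\emptyset$ for all vertices. Coordinate matrices $A_i(v,w)=|v\Lambda^{e_i}w|$, $\rho(\Lambda)^n=\prod_i\rho(A_i)^{n_i}$ (spectral radii). $x^\Lambda$ is the unique vector in $[0,\infty)^{\Lambda^0}$ with $\sum_vx^\Lambda_v=1$ and $A_ix^\Lambda=\rho(A_i)x^\Lambda$ for all $i$. (A unique such Borel probability measure $M$ exists.) Infinite paths: degree-preserving functors $x:\Omega_k\to\Lambda$, $\Omega_k=\{(m,n)\in\mathbb{N}^k\times\mathbb{N}^k:m\le n\}$ with $r(m,n)=(m,m)$, $s(m,n)=(n,n)$, $(m,n)(n,p)=(m,p)$,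 $d(m,n)=n-m$; $\Lambda^\infty$ their set, with the topology generated by the compact open sets $Z(\lambda)=\{x:x(0,d(\lambda))=\lambda\}$; $\sigma^n(x)(p,q)=x(n+p,n+q)$. $\operatorname{Per}\Lambda=\{m-n:\sigma^m(x)=\sigma^n(x)\ \forall x\in\Lambda^\infty\}$. *)

theory Defs
  imports "HOL-Probability.Probability"
begin

text \<open>A k-graph, with k the cardinality of the finite type 'k and degrees in
  'k => nat (= N^k).  The category is given by its set of morphisms; objects are
  identified with identity morphisms; rng/src give range/source identities,
  cmp mu nu is the composite mu nu (defined when src mu = rng nu).\<close>

record ('a, 'k) kgraph =
  mor :: "'a set"
  rng :: "'a \<Rightarrow> 'a"
  src :: "'a \<Rightarrow> 'a"
  cmp :: "'a \<Rightarrow> 'a \<Rightarrow> 'a"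
  deg :: "'a \<Rightarrow> 'k \<Rightarrow> nat"

definition padd :: "('k \<Rightarrow> nat) \<Rightarrow> ('k \<Rightarrow> nat) \<Rightarrow> 'k \<Rightarrow> nat" where
  "padd m n = (\<lambda>i. m i + n i)"

definition psub :: "('k \<Rightarrow> nat) \<Rightarrow> ('k \<Rightarrow> nat) \<Rightarrow> 'k \<Rightarrow> nat" where
  "psub n m = (\<lambda>i. n i - m i)"

definition zero_deg :: "'k \<Rightarrow> nat" where
  "zero_deg = (\<lambda>j. 0)"

definition unit_deg :: "'k \<Rightarrow> 'k \<Rightarrow> nat" where
  "unit_deg i = (\<lambda>j. if j = i then 1 else 0)"

definition is_category :: "('a, 'k) kgraph \<Rightarrow> bool" where
  "is_category G \<longleftrightarrow>
     countable (mor G) \<and>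
     (\<forall>l\<in>mor G. rng G l \<in> mor G \<and> src G l \<in> mor G \<and>
        rng G (rng G l) = rng G l \<and> src G (rng G l) = rng G l \<and>
        rng G (src G l) = src G l \<and> src G (src G l) = src G l \<and>
        cmp G (rng G l) l = l \<and> cmp G l (src G l) = l) \<and>
     (\<forall>m\<in>mor G. \<forall>n\<in>mor G. src G m = rng G n \<longrightarrow>
        cmp G m n \<in> mor G \<and> rng G (cmp G m n) = rng G m \<and> src G (cmp G m n) = src G n) \<and>
     (\<forall>a\<in>mor G. \<forall>b\<in>mor G. \<forall>c\<in>mor G. src G a = rng G b \<and> src G b = rng G c \<longrightarrow>
        cmp G (cmp G a b) c = cmp G a (cmp G b c))"

definition k_graph :: "('a, 'k::finite) kgraph \<Rightarrow> bool" where
  "k_graph G \<longleftrightarrow>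
     is_category G \<and>
     (\<forall>l\<in>mor G. deg G (rng G l) = zero_deg) \<and>
     (\<forall>m\<in>mor G. \<forall>n\<in>mor G. src G m = rng G n \<longrightarrow>
        deg G (cmp G m n) = padd (deg G m) (deg G n)) \<and>
     (\<forall>l\<in>mor G. \<forall>m n. deg G l = padd m n \<longrightarrow>
        (\<exists>!p. fst p \<in> mor G \<and> snd p \<in> mor G \<and> src G (fst p) = rng G (snd p) \<and>
              deg G (fst p) = m \<and> deg G (snd p) = n \<and> l = cmp G (fst p) (snd p)))"

definition layer :: "('a, 'k) kgraph \<Rightarrow> ('k \<Rightarrow> nat) \<Rightarrow> 'a set" where
  "layer G n = {l \<in> mor G. deg G l = n}"

definition verts :: "('a, 'k) kgraph \<Rightarrow> 'a set" where
  "verts G = layer G zero_deg"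

definition standing :: "('a, 'k) kgraph \<Rightarrow> bool" where
  "standing G \<longleftrightarrow> (\<forall>i. layer G (unit_deg i) \<noteq> {})"

definition finite_kgraph :: "('a, 'k) kgraph \<Rightarrow> bool" where
  "finite_kgraph G \<longleftrightarrow> (\<forall>n. finite (layer G n))"

definition strongly_connected :: "('a, 'k) kgraph \<Rightarrow> bool" where
  "strongly_connected G \<longleftrightarrow>
     (\<forall>v\<in>verts G. \<forall>w\<in>verts G. \<exists>l\<in>mor G. rng G l = v \<and> src G l = w)"

definition coord :: "('a, 'k) kgraph \<Rightarrow> 'k \<Rightarrow> 'a \<Rightarrow> 'a \<Rightarrow> nat" where
  "coord G i v w = card {l \<in> layer G (unit_deg i). rng G l = v \<and> src G l = w}"

definition eigenvalues_on :: "'a set \<Rightarrow> ('a \<Rightarrow> 'a \<Rightarrow> real) \<Rightarrow> complex set" where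
  "eigenvalues_on V A = {c. \<exists>y::'a \<Rightarrow> complex. (\<exists>v\<in>V. y v \<noteq> 0) \<and>
       (\<forall>v\<in>V. (\<Sum>w\<in>V. complex_of_real (A v w) * y w) = c * y v)}"

definition spectral_radius_on :: "'a set \<Rightarrow> ('a \<Rightarrow> 'a \<Rightarrow> real) \<Rightarrow> real" where
  "spectral_radius_on V A = Sup (cmod ` eigenvalues_on V A)"

definition rho :: "('a, 'k) kgraph \<Rightarrow> 'k \<Rightarrow> real" where
  "rho G i = spectral_radius_on (verts G) (\<lambda>v w. real (coord G i v w))"

definition rho_pow :: "('a, 'k::finite) kgraph \<Rightarrow> ('k \<Rightarrow> nat) \<Rightarrow> real" where
  "rho_pow G n = (\<Prod>i\<in>UNIV. rho G i ^ n i)"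

text \<open>The unimodular Perron-Frobenius eigenvector x^Lambda (vectors are functions
  vanishing off the vertex set).\<close>
definition xLam :: "('a, 'k) kgraph \<Rightarrow> 'a \<Rightarrow> real" where
  "xLam G = (THE x. (\<forall>v. v \<notin> verts G \<longrightarrow> x v = 0) \<and> (\<forall>v\<in>verts G. 0 \<le> x v) \<and>
      (\<Sum>v\<in>verts G. x v) = 1 \<and>
      (\<forall>i. \<forall>v\<in>verts G. (\<Sum>w\<in>verts G. real (coord G i v w) * x w) = rho G i * x v))"

text \<open>Infinite paths: degree-preserving functors Omega_k -> Lambda, represented as
  functions x m n (defined for m <= n, undefined otherwise).\<close>
definition paths :: "('a, 'k) kgraph \<Rightarrow> (('k \<Rightarrow> nat) \<Rightarrow> ('k \<Rightarrow> nat) \<Rightarrow> 'a) set" where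
  "paths G = {x.
     (\<forall>m n. m \<le> n \<longrightarrow> x m n \<in> mor G \<and> deg G (x m n) = psub n m \<and>
                          rng G (x m n) = x m m \<and> src G (x m n) = x n n) \<and>
     (\<forall>m n p. m \<le> n \<and> n \<le> p \<longrightarrow> cmp G (x m n) (x n p) = x m p) \<and>
     (\<forall>m n. \<not> m \<le> n \<longrightarrow> x m n = undefined)}"

definition cyl :: "('a, 'k) kgraph \<Rightarrow> 'a \<Rightarrow> (('k \<Rightarrow> nat) \<Rightarrow> ('k \<Rightarrow> nat) \<Rightarrow> 'a) set" where
  "cyl G l = {x \<in> paths G. x zero_deg (deg G l) = l}"

definition path_topology :: "('a, 'k) kgraph \<Rightarrow> (('k \<Rightarrow> nat) \<Rightarrow> ('k \<Rightarrow> nat) \<Rightarrow> 'a) topology" where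
  "path_topology G = topology_generated_by (cyl G ` mor G)"

definition path_borel :: "('a, 'k) kgraph \<Rightarrow> (('k \<Rightarrow> nat) \<Rightarrow> ('k \<Rightarrow> nat) \<Rightarrow> 'a) measure" where
  "path_borel G = sigma (paths G) {U. openin (path_topology G) U}"

definition shift :: "('k \<Rightarrow> nat) \<Rightarrow> (('k \<Rightarrow> nat) \<Rightarrow> ('k \<Rightarrow> nat) \<Rightarrow> 'a)
                     \<Rightarrow> ('k \<Rightarrow> nat) \<Rightarrow> ('k \<Rightarrow> nat) \<Rightarrow> 'a" where
  "shift m x = (\<lambda>p q. if p \<le> q then x (padd m p) (padd m q) else undefined)"

definition Per :: "('a, 'k) kgraph \<Rightarrow> ('k \<Rightarrow> int) set" where
  "Per G = {(\<lambda>i. int (m i) - int (n i)) | m n. \<forall>x\<in>paths G. shift m x = shift n x}"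

end

theory Submission
  imports Defs
begin

locale kgr =
  fixes G :: "('a, 'k::finite) kgraph"
  assumes kg: "k_graph G"
begin

lemma cat: "is_category G" using kg unfolding k_graph_def by blast

lemma rng_mor: "l \<in> mor G \<Longrightarrow> rng G l \<in> mor G"
  and src_mor: "l \<in> mor G \<Longrightarrow> src G l \<in> mor G"
  and rng_rng: "l \<in> mor G \<Longrightarrow> rng G (rng G l) = rng G l"
  and src_rng: "l \<in> mor G \<Longrightarrow> src G (rng G l) = rng G l"
  and rng_src: "l \<in> mor G \<Longrightarrow> rng G (src G l) = src G l"
  and src_src: "l \<in> mor G \<Longrightarrow> src G (src G l) = src G l"
  and cmp_rng: "l \<in> mor G \<Longrightarrow> cmp G (rng G l) l = l"
  and cmp_src: "l \<in> mor G \<Longrightarrow> cmp G l (src G l) = l"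
  using cat unfolding is_category_def by blast+

lemma cmp_mor: "m \<in> mor G \<Longrightarrow> n \<in> mor G \<Longrightarrow> src G m = rng G n \<Longrightarrow> cmp G m n \<in> mor G"
  and rng_cmp: "m \<in> mor G \<Longrightarrow> n \<in> mor G \<Longrightarrow> src G m = rng G n \<Longrightarrow> rng G (cmp G m n) = rng G m"
  and src_cmp: "m \<in> mor G \<Longrightarrow> n \<in> mor G \<Longrightarrow> src G m = rng G n \<Longrightarrow> src G (cmp G m n) = src G n"
  using cat unfolding is_category_def by blast+

lemma countable_mor: "countable (mor G)" using cat unfolding is_category_def by blast

lemma deg_rng: "l \<in> mor G \<Longrightarrow> deg G (rng G l) = zero_deg"
  using kg unfolding k_graph_def by blast

lemma deg_cmp: "m \<in> mor G \<Longrightarrow> n \<in> mor G \<Longrightarrow> src G m = rng G n \<Longrightarrow>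
   deg G (cmp G m n) = padd (deg G m) (deg G n)"
  using kg unfolding k_graph_def by blast

lemma deg_src: "l \<in> mor G \<Longrightarrow> deg G (src G l) = zero_deg"
  by (metis deg_rng rng_src src_mor)

lemma fact_ex: assumes "l \<in> mor G" "deg G l = padd a b"
  shows "\<exists>\<mu> \<nu>. \<mu> \<in> mor G \<and> \<nu> \<in> mor G \<and> src G \<mu> = rng G \<nu> \<and> deg G \<mu> = a \<and> deg G \<nu> = b
     \<and> l = cmp G \<mu> \<nu>"
proof -
  from kg assms have "\<exists>!p. fst p \<in> mor G \<and> snd p \<in> mor G \<and> src G (fst p) = rng G (snd p) \<and>
              deg G (fst p) = a \<and> deg G (snd p) = b \<and> l = cmp G (fst p) (snd p)"
    unfolding k_graph_def by blast
  then show ?thesis by blast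
qed

lemma fact_uniq:
  assumes "\<mu> \<in> mor G" "\<nu> \<in> mor G" "\<mu>' \<in> mor G" "\<nu>' \<in> mor G"
    "src G \<mu> = rng G \<nu>" "src G \<mu>' = rng G \<nu>'" "deg G \<mu> = deg G \<mu>'" "deg G \<nu> = deg G \<nu>'"
    "cmp G \<mu> \<nu> = cmp G \<mu>' \<nu>'"
  shows "\<mu> = \<mu>' \<and> \<nu> = \<nu>'"
proof -
  let ?l = "cmp G \<mu> \<nu>"
  have "?l \<in> mor G" using assms cmp_mor by blast
  moreover have "deg G ?l = padd (deg G \<mu>) (deg G \<nu>)" using assms deg_cmp by blast
  ultimately have "\<exists>!p. fst p \<in> mor G \<and> snd p \<in> mor G \<and> src G (fst p) = rng G (snd p) \<and>
              deg G (fst p) = deg G \<mu> \<and> deg G (snd p) = deg G \<nu> \<and> ?l = cmp G (fst p) (snd p)"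
    using kg unfolding k_graph_def by blast
  then have "(\<mu>, \<nu>) = (\<mu>', \<nu>')" using assms by (metis fst_conv snd_conv)
  then show ?thesis by simp
qed

lemma deg0_id: assumes "l \<in> mor G" "deg G l = zero_deg"
  shows "rng G l = l \<and> src G l = l"
proof -
  have "rng G l = l \<and> l = src G l"
    apply (rule fact_uniq)
    using assms by (simp_all add: rng_mor src_mor src_rng rng_src deg_rng deg_src cmp_rng cmp_src)
  then show ?thesis by simp
qed

end

lemma padd_zero[simp]: "padd m zero_deg = m" "padd zero_deg m = m"
  by (auto simp: padd_def zero_deg_def)
lemma psub_zero[simp]: "psub m zero_deg = m" by (auto simp: psub_def zero_deg_def)
lemma psub_self[simp]: "psub m m = zero_deg" by (auto simp: psub_def zero_deg_def)
lemma zero_le[simp]: "zero_deg \<le> (m::'k \<Rightarrow> nat)" by (auto simp: le_fun_def zero_deg_def)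
lemma le_padd[simp]: "(m::'k\<Rightarrow>nat) \<le> padd m p" "(m::'k\<Rightarrow>nat) \<le> padd p m" by (auto simp: le_fun_def padd_def)
lemma padd_mono: "(p::'k\<Rightarrow>nat) \<le> q \<Longrightarrow> padd a p \<le> padd a q" by (auto simp: le_fun_def padd_def)
lemma padd_comm: "padd a b = padd b a" by (auto simp: padd_def)
lemma padd_assoc: "padd (padd a b) c = padd a (padd b c)" by (auto simp: padd_def)
lemma psub_padd: "psub (padd a q) (padd a p) = psub q p" by (auto simp: psub_def padd_def)
lemma psub_padd2[simp]: "psub (padd a p) a = p" by (auto simp: psub_def padd_def)

context kgr begin

lemma path_mor: "x \<in> paths G \<Longrightarrow> a \<le> b \<Longrightarrow> x a b \<in> mor G"
  and path_deg: "x \<in> paths G \<Longrightarrow> a \<le> b \<Longrightarrow> deg G (x a b) = psub b a"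
  and path_rng: "x \<in> paths G \<Longrightarrow> a \<le> b \<Longrightarrow> rng G (x a b) = x a a"
  and path_src: "x \<in> paths G \<Longrightarrow> a \<le> b \<Longrightarrow> src G (x a b) = x b b"
  unfolding paths_def by blast+

lemma path_cmp: "x \<in> paths G \<Longrightarrow> a \<le> b \<Longrightarrow> b \<le> c \<Longrightarrow> cmp G (x a b) (x b c) = x a c"
  unfolding paths_def by blast

lemma path_undef: "x \<in> paths G \<Longrightarrow> \<not> a \<le> b \<Longrightarrow> x a b = undefined"
  unfolding paths_def by blast

lemma path_split: assumes x: "x \<in> paths G" and ab: "a \<le> b" and bc: "b \<le> c"
  and y: "y \<in> paths G" and eq: "x a c = y a c"
  shows "x a b = y a b \<and> x b c = y b c"
proof -
  have ac: "a \<le> c" using ab bc by (rule order_trans)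
  show ?thesis
    apply (rule fact_uniq)
    using x y ab bc path_mor path_deg path_rng path_src path_cmp[OF x ab bc] path_cmp[OF y ab bc] eq
    by auto
qed

lemma path_agree: assumes x: "x \<in> paths G" and y: "y \<in> paths G"
  and eq: "x zero_deg T = y zero_deg T" and ab: "a \<le> b" and bT: "b \<le> T"
  shows "x a b = y a b"
proof -
  have aT: "a \<le> T" using ab bT by (rule order_trans)
  have "x a T = y a T" using path_split[OF x zero_le aT y eq] by blast
  then show ?thesis using path_split[OF x ab bT y] by blast
qed

lemma shift_paths: assumes x: "x \<in> paths G" shows "shift a x \<in> paths G"
  unfolding paths_def shift_def
proof (intro CollectI conjI allI impI)
  fix p q :: "'k \<Rightarrow> nat" assume pq: "p \<le> q"
  have pq': "padd a p \<le> padd a q" using pq by (rule padd_mono)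
  show "(if p \<le> q then x (padd a p) (padd a q) else undefined) \<in> mor G"
    using pq pq' path_mor[OF x] by simp
  show "deg G (if p \<le> q then x (padd a p) (padd a q) else undefined) = psub q p"
    using pq pq' path_deg[OF x] by (simp add: psub_padd)
  show "rng G (if p \<le> q then x (padd a p) (padd a q) else undefined) =
    (if p \<le> p then x (padd a p) (padd a p) else undefined)"
    using pq pq' path_rng[OF x] by simp
  show "src G (if p \<le> q then x (padd a p) (padd a q) else undefined) =
    (if q \<le> q then x (padd a q) (padd a q) else undefined)"
    using pq pq' path_src[OF x] by simp
next
  fix p q r :: "'k \<Rightarrow> nat" 
  assume h: "p \<le> q \<and> q \<le> r"
  show "cmp G (if p \<le> q then x (padd a p) (padd a q) else undefined)
     (if q \<le> r then x (padd a q) (padd a r) else undefined) =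
    (if p \<le> r then x (padd a p) (padd a r) else undefined)"
  proof -
    from h have "padd a p \<le> padd a q" "padd a q \<le> padd a r" using padd_mono by blast+
    then show ?thesis using h path_cmp[OF x] order_trans[of p q r] by simp
  qed
qed (simp)

end

lemma shift_shift: "shift p (shift q x) = shift (padd q p) x"
  by (rule ext, rule ext) (auto simp: shift_def padd_assoc padd_mono)

context kgr begin

definition N where "N \<mu> p = {\<nu> \<in> mor G. rng G \<nu> = src G \<mu> \<and> deg G \<nu> = p}"

lemma cyl_cmp: assumes mu: "\<mu> \<in> mor G" and nu: "\<nu> \<in> mor G" and c: "src G \<mu> = rng G \<nu>"
  and x: "x \<in> cyl G (cmp G \<mu> \<nu>)"
  shows "x \<in> cyl G \<mu> \<and> shift (deg G \<mu>) x \<in> cyl G \<nu>"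
proof -
  let ?T = "padd (deg G \<mu>) (deg G \<nu>)"
  have xp: "x \<in> paths G" and xe: "x zero_deg ?T = cmp G \<mu> \<nu>"
    using x deg_cmp[OF mu nu c] unfolding cyl_def by auto
  have le: "deg G \<mu> \<le> ?T" by simp
  have "x zero_deg (deg G \<mu>) = \<mu> \<and> x (deg G \<mu>) ?T = \<nu>"
    apply (rule fact_uniq)
    using xp le mu nu c path_mor[OF xp] path_deg[OF xp] path_rng[OF xp] path_src[OF xp]
      path_cmp[OF xp zero_le le] xe by auto
  then show ?thesis using xp shift_paths[OF xp] unfolding cyl_def shift_def by auto
qed

lemma cyl_ext: assumes mu: "\<mu> \<in> mor G" and x: "x \<in> cyl G \<mu>"
  shows "x (deg G \<mu>) (padd (deg G \<mu>) p) \<in> N \<mu> p \<and>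
         x \<in> cyl G (cmp G \<mu> (x (deg G \<mu>) (padd (deg G \<mu>) p)))"
proof -
  let ?d = "deg G \<mu>"
  let ?nu = "x ?d (padd ?d p)"
  have xp: "x \<in> paths G" and xe: "x zero_deg ?d = \<mu>" using x unfolding cyl_def by auto
  have nu: "?nu \<in> mor G" "deg G ?nu = p" "rng G ?nu = src G \<mu>"
    using path_mor[OF xp] path_deg[OF xp] path_rng[OF xp] path_src[OF xp, of zero_deg ?d] xe by auto
  have "deg G (cmp G \<mu> ?nu) = padd ?d p" using deg_cmp[OF mu nu(1)] nu by simp
  moreover have "x zero_deg (padd ?d p) = cmp G \<mu> ?nu"
    using path_cmp[OF xp zero_le, of ?d "padd ?d p"] xe by simp
  ultimately show ?thesis using nu xp unfolding N_def cyl_def by auto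
qed

lemma cyl_decomp: assumes mu: "\<mu> \<in> mor G"
  shows "cyl G \<mu> = (\<Union>\<nu>\<in>N \<mu> p. cyl G (cmp G \<mu> \<nu>))"
proof
  show "cyl G \<mu> \<subseteq> (\<Union>\<nu>\<in>N \<mu> p. cyl G (cmp G \<mu> \<nu>))" using cyl_ext[OF mu] by blast
  show "(\<Union>\<nu>\<in>N \<mu> p. cyl G (cmp G \<mu> \<nu>)) \<subseteq> cyl G \<mu>"
    using cyl_cmp[OF mu] unfolding N_def by auto
qed

lemma cyl_disj: assumes mu: "\<mu> \<in> mor G"
  shows "disjoint_family_on (\<lambda>\<nu>. cyl G (cmp G \<mu> \<nu>)) (N \<mu> p)"
  unfolding disjoint_family_on_def
proof (intro ballI impI)
  fix a b assume a: "a \<in> N \<mu> p" and b: "b \<in> N \<mu> p" and ab: "a \<noteq> b"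
  show "cyl G (cmp G \<mu> a) \<inter> cyl G (cmp G \<mu> b) = {}"
  proof (rule ccontr)
    assume "cyl G (cmp G \<mu> a) \<inter> cyl G (cmp G \<mu> b) \<noteq> {}"
    then obtain x where "x \<in> cyl G (cmp G \<mu> a)" "x \<in> cyl G (cmp G \<mu> b)" by blast
    then have "shift (deg G \<mu>) x \<in> cyl G a" "shift (deg G \<mu>) x \<in> cyl G b"
      using cyl_cmp[OF mu] a b unfolding N_def by auto
    then show False using a b ab unfolding N_def cyl_def by auto
  qed
qed

lemma N_finite: "finite_kgraph G \<Longrightarrow> finite (N \<mu> p)"
  unfolding finite_kgraph_def N_def layer_def
  by (rule finite_subset[of _ "{l \<in> mor G. deg G l = p}"]) auto

lemma eq_char: assumes x: "x \<in> paths G"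
  shows "shift m x = shift n x \<longleftrightarrow> (\<forall>p. x m (padd m p) = x n (padd n p))"
proof
  assume h: "shift m x = shift n x"
  show "\<forall>p. x m (padd m p) = x n (padd n p)"
  proof
    fix p
    have "shift m x zero_deg p = shift n x zero_deg p" using h by simp
    then show "x m (padd m p) = x n (padd n p)" unfolding shift_def by simp
  qed
next
  assume h: "\<forall>p. x m (padd m p) = x n (padd n p)"
  show "shift m x = shift n x"
  proof (rule ext, rule ext)
    fix p q :: "'k \<Rightarrow> nat"
    show "shift m x p q = shift n x p q"
    proof (cases "p \<le> q")
      case True
      have mp: "m \<le> padd m p" "n \<le> padd n p" by simp_all
      have pq: "padd m p \<le> padd m q" "padd n p \<le> padd n q" using padd_mono[OF True] by blast+
      have e1: "cmp G (x m (padd m p)) (x (padd m p) (padd m q)) = x m (padd m q)"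
        using path_cmp[OF x mp(1) pq(1)] by simp
      have e2: "cmp G (x n (padd n p)) (x (padd n p) (padd n q)) = x n (padd n q)"
        using path_cmp[OF x mp(2) pq(2)] by simp
      have "x (padd m p) (padd m q) = x (padd n p) (padd n q)"
        apply (rule conjunct2[OF fact_uniq[of "x m (padd m p)" "x (padd m p) (padd m q)" "x n (padd n p)" "x (padd n p) (padd n q)"]])
        apply (rule path_mor[OF x mp(1)])
        apply (rule path_mor[OF x pq(1)])
        apply (rule path_mor[OF x mp(2)])
        apply (rule path_mor[OF x pq(2)])
        apply (simp add: path_src[OF x mp(1)] path_rng[OF x pq(1)])
        apply (simp add: path_src[OF x mp(2)] path_rng[OF x pq(2)])
        apply (simp add: path_deg[OF x mp(1)] path_deg[OF x mp(2)])
        apply (simp add: path_deg[OF x pq(1)] path_deg[OF x pq(2)] psub_padd)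
        using e1 e2 h by metis
      then show ?thesis using True unfolding shift_def by simp
    qed (simp add: shift_def)
  qed
qed

lemma bad: assumes y: "y \<in> paths G" and ne: "shift m y \<noteq> shift n y"
  shows "\<exists>l\<in>mor G. \<forall>x\<in>cyl G l. shift m x \<noteq> shift n x"
proof -
  obtain p where p: "y m (padd m p) \<noteq> y n (padd n p)" using eq_char[OF y] ne by blast
  define T where "T = padd (padd m n) p"
  have le1: "padd m p \<le> T" "padd n p \<le> T" unfolding T_def by (auto simp: le_fun_def padd_def)
  have l: "y zero_deg T \<in> mor G" "deg G (y zero_deg T) = T" using path_mor[OF y] path_deg[OF y] by auto
  show ?thesis
  proof (intro bexI[OF _ l(1)] ballI)
    fix x assume x: "x \<in> cyl G (y zero_deg T)"
    then have xp: "x \<in> paths G" and xe: "x zero_deg T = y zero_deg T" using l unfolding cyl_def by auto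
    have "x m (padd m p) = y m (padd m p)" "x n (padd n p) = y n (padd n p)"
      using path_agree[OF xp y xe _ le1(1)] path_agree[OF xp y xe _ le1(2)] by auto
    then show "shift m x \<noteq> shift n x" using eq_char[OF xp] p by metis
  qed
qed

lemma bad_cmp: assumes b: "\<forall>x\<in>cyl G l. shift m x \<noteq> shift n x"
  and mu: "\<mu> \<in> mor G" and l: "l \<in> mor G" and c: "src G \<mu> = rng G l"
  shows "\<forall>x\<in>cyl G (cmp G \<mu> l). shift m x \<noteq> shift n x"
proof (intro ballI notI)
  fix x assume x: "x \<in> cyl G (cmp G \<mu> l)" and e: "shift m x = shift n x"
  have "shift (deg G \<mu>) x \<in> cyl G l" using cyl_cmp[OF mu l c x] by blast
  moreover have "shift m (shift (deg G \<mu>) x) = shift n (shift (deg G \<mu>) x)"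
    unfolding shift_shift
    by (metis e padd_comm shift_shift)
  ultimately show False using b by blast
qed

end

lemma rho_pow_zero: "rho_pow G zero_deg = 1"
  unfolding rho_pow_def zero_deg_def by simp

lemma rho_pow_padd: "rho_pow G (padd a b) = rho_pow G a * rho_pow G b"
  unfolding rho_pow_def padd_def by (simp add: power_add prod.distrib)

lemma rho_pow_unit: "rho_pow G (unit_deg i) = rho G i"
proof -
  have "rho_pow G (unit_deg i) = (\<Prod>j\<in>UNIV. if j = i then rho G j else 1)"
    unfolding rho_pow_def unit_deg_def by (rule prod.cong) auto
  also have "\<dots> = rho G i" by (simp add: prod.delta)
  finally show ?thesis .
qed

lemma rho_pow_nz: "(\<And>i. rho G i \<noteq> 0) \<Longrightarrow> rho_pow G d \<noteq> 0"
  unfolding rho_pow_def by (simp add: prod_zero_iff)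

locale kgm = kgr G + prob_space M
  for G :: "('a, 'k::finite) kgraph"
  and M :: "(('k \<Rightarrow> nat) \<Rightarrow> ('k \<Rightarrow> nat) \<Rightarrow> 'a) measure" +
  assumes std: "standing G" and fin: "finite_kgraph G" and sc: "strongly_connected G"
    and sp: "space M = paths G" and st: "sets M = sets (path_borel G)"
    and H: "\<forall>l\<in>mor G. measure M (cyl G l) = inverse (rho_pow G (deg G l)) * xLam G (src G l)"
begin

lemma opens_sub: "{U. openin (path_topology G) U} \<subseteq> Pow (paths G)"
proof -
  have "\<Union> (cyl G ` mor G) \<subseteq> paths G" unfolding cyl_def by auto
  then show ?thesis unfolding path_topology_def using openin_subset by fastforce
qed

lemma sets_eq: "sets M = sigma_sets (paths G) {U. openin (path_topology G) U}"
  using st unfolding path_borel_def by (simp add: sets_measure_of[OF opens_sub])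

lemma cyl_sets: "l \<in> mor G \<Longrightarrow> cyl G l \<in> sets M"
  unfolding sets_eq
  by (rule sigma_sets.Basic) (auto simp: path_topology_def openin_topology_generated_by_iff
        intro: generate_topology_on.Basis)

lemma meas_cyl: "l \<in> mor G \<Longrightarrow> measure M (cyl G l) = inverse (rho_pow G (deg G l)) * xLam G (src G l)"
  using H by blast

lemma meas_vert: "v \<in> mor G \<Longrightarrow> deg G v = zero_deg \<Longrightarrow> measure M (cyl G v) = xLam G v"
  using meas_cyl deg0_id by (simp add: rho_pow_zero)

lemma meas_cyl2: "l \<in> mor G \<Longrightarrow> measure M (cyl G l) = inverse (rho_pow G (deg G l)) * measure M (cyl G (src G l))"
  using meas_cyl meas_vert[of "src G l"] src_mor deg_src by simp

lemma meas_cmp: assumes mu: "\<mu> \<in> mor G" and nu: "\<nu> \<in> mor G" and c: "src G \<mu> = rng G \<nu>"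
  shows "measure M (cyl G (cmp G \<mu> \<nu>)) * measure M (cyl G (src G \<mu>)) =
         measure M (cyl G \<mu>) * measure M (cyl G \<nu>)"
proof -
  have cm: "cmp G \<mu> \<nu> \<in> mor G" using cmp_mor[OF mu nu c] .
  have s: "src G (cmp G \<mu> \<nu>) = src G \<nu>" using src_cmp[OF mu nu c] .
  have sv: "measure M (cyl G (src G \<mu>)) = measure M (cyl G (rng G \<nu>))" using c by simp
  have rv: "measure M (cyl G (rng G \<nu>)) = xLam G (rng G \<nu>)" using meas_vert rng_mor[OF nu] deg_rng[OF nu] by blast
  have sm: "measure M (cyl G (src G \<mu>)) = xLam G (src G \<mu>)" using meas_vert src_mor[OF mu] deg_src[OF mu] by blast
  show ?thesis
    unfolding meas_cyl[OF cm] meas_cyl[OF mu] meas_cyl[OF nu] s deg_cmp[OF mu nu c] rho_pow_padd sm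
    by (simp add: c)
qed

lemma meas_sum: assumes mu: "\<mu> \<in> mor G"
  shows "measure M (cyl G \<mu>) = (\<Sum>\<nu>\<in>N \<mu> p. measure M (cyl G (cmp G \<mu> \<nu>)))"
proof -
  have "measure M (cyl G \<mu>) = measure M (\<Union>\<nu>\<in>N \<mu> p. cyl G (cmp G \<mu> \<nu>))"
    using cyl_decomp[OF mu] by metis
  also have "\<dots> = (\<Sum>\<nu>\<in>N \<mu> p. measure M (cyl G (cmp G \<mu> \<nu>)))"
    apply (rule finite_measure_finite_Union)
    using N_finite[OF fin] cyl_disj[OF mu] cyl_sets cmp_mor[OF mu] unfolding N_def by auto
  finally show ?thesis .
qed

lemma verts_finite: "finite (verts G)"
  using fin unfolding finite_kgraph_def verts_def by blast

lemma paths_union: "paths G = (\<Union>v\<in>verts G. cyl G v)"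
proof
  show "paths G \<subseteq> (\<Union>v\<in>verts G. cyl G v)"
  proof
    fix x assume x: "x \<in> paths G"
    have "x zero_deg zero_deg \<in> verts G" using path_mor[OF x] path_deg[OF x]
      unfolding verts_def layer_def by auto
    moreover have "x \<in> cyl G (x zero_deg zero_deg)"
      using x path_deg[OF x] unfolding cyl_def by auto
    ultimately show "x \<in> (\<Union>v\<in>verts G. cyl G v)" by blast
  qed
qed (auto simp: cyl_def)

lemma verts_mor: "v \<in> verts G \<Longrightarrow> v \<in> mor G \<and> deg G v = zero_deg"
  unfolding verts_def layer_def by auto

lemma exists_pos: "\<exists>w\<in>verts G. measure M (cyl G w) > 0"
proof (rule ccontr)
  assume "\<not> ?thesis"
  then have z: "\<forall>w\<in>verts G. measure M (cyl G w) \<le> 0" by auto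
  have "1 = measure M (space M)" using prob_space by simp
  also have "\<dots> = measure M (\<Union>v\<in>verts G. cyl G v)" using sp paths_union by simp
  also have "\<dots> \<le> (\<Sum>v\<in>verts G. measure M (cyl G v))"
    apply (rule finite_measure_subadditive_finite[OF verts_finite])
    using cyl_sets verts_mor by auto
  also have "\<dots> \<le> 0" using z by (simp add: sum_nonpos)
  finally show False by simp
qed

lemma rho_nz: "rho G i \<noteq> 0"
proof
  assume r: "rho G i = 0"
  obtain w where w: "w \<in> verts G" "measure M (cyl G w) > 0" using exists_pos by blast
  have wm: "w \<in> mor G" and wd: "deg G w = zero_deg" using verts_mor[OF w(1)] by auto
  have "measure M (cyl G w) = (\<Sum>\<nu>\<in>N w (unit_deg i). measure M (cyl G (cmp G w \<nu>)))"
    by (rule meas_sum[OF wm])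
  also have "\<dots> = 0"
  proof (rule sum.neutral, rule ballI)
    fix \<nu> assume nu: "\<nu> \<in> N w (unit_deg i)"
    then have nm: "\<nu> \<in> mor G" and nr: "rng G \<nu> = w" and nd: "deg G \<nu> = unit_deg i"
      using deg0_id[OF wm wd] unfolding N_def by auto
    have "cmp G w \<nu> = \<nu>" using cmp_rng[OF nm] nr by simp
    then show "measure M (cyl G (cmp G w \<nu>)) = 0"
      using meas_cyl[OF nm] nd rho_pow_unit[of G i] r by simp
  qed
  finally show False using w by simp
qed

lemma rho_pow_nz': "rho_pow G d \<noteq> 0" using rho_pow_nz rho_nz by blast

lemma verts_pos: assumes v: "v \<in> verts G" shows "measure M (cyl G v) > 0"
proof -
  obtain w where w: "w \<in> verts G" "measure M (cyl G w) > 0" using exists_pos by blast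
  obtain b where b: "b \<in> mor G" "rng G b = v" "src G b = w"
    using sc v w unfolding strongly_connected_def by blast
  have "measure M (cyl G b) = inverse (rho_pow G (deg G b)) * measure M (cyl G w)"
    using meas_cyl2[OF b(1)] b by simp
  then have nz: "measure M (cyl G b) \<noteq> 0" using w rho_pow_nz' by simp
  have vm: "v \<in> mor G" using verts_mor[OF v] by simp
  have sub: "cyl G b \<subseteq> cyl G v"
  proof
    fix x assume "x \<in> cyl G b"
    then have "x \<in> cyl G (cmp G v b)" using cmp_rng[OF b(1)] b by simp
    then show "x \<in> cyl G v" using cyl_cmp[OF vm b(1)] deg0_id[of v] verts_mor[OF v] b by auto
  qed
  have "measure M (cyl G b) \<le> measure M (cyl G v)"
    by (rule finite_measure_mono[OF sub cyl_sets[OF vm]])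
  then show ?thesis using nz by (metis measure_nonneg order_le_less order_less_le_trans)
qed

lemma src_vert: "l \<in> mor G \<Longrightarrow> src G l \<in> verts G"
  using src_mor deg_src unfolding verts_def layer_def by auto

lemma rng_vert: "l \<in> mor G \<Longrightarrow> rng G l \<in> verts G"
  using rng_mor deg_rng unfolding verts_def layer_def by auto

lemma cyl_pos: assumes l: "l \<in> mor G" shows "measure M (cyl G l) > 0"
proof -
  have e: "measure M (cyl G l) = inverse (rho_pow G (deg G l)) * measure M (cyl G (src G l))"
    using meas_cyl2[OF l] .
  have p: "measure M (cyl G (src G l)) > 0" using verts_pos[OF src_vert[OF l]] .
  have "measure M (cyl G l) \<noteq> 0" using e p rho_pow_nz' by simp
  then show ?thesis using measure_nonneg[of M "cyl G l"] by linarith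
qed

lemma cyl_ne: "l \<in> mor G \<Longrightarrow> cyl G l \<noteq> {}"
  using cyl_pos by fastforce

end

context kgm begin

lemma E_sets: "{x \<in> paths G. shift m x = shift n x} \<in> sets M"
proof -
  define S where "S p = {x \<in> paths G. x m (padd m p) = x n (padd n p)}" for p
  have E: "{x \<in> paths G. shift m x = shift n x} = (\<Inter>p\<in>UNIV. S p)"
    unfolding S_def using eq_char by auto
  have "S p \<in> sets M" for p
  proof -
    define T where "T = padd (padd m n) p"
    have le1: "padd m p \<le> T" "padd n p \<le> T" unfolding T_def by (auto simp: le_fun_def padd_def)
    have "S p = \<Union> (cyl G ` {l \<in> mor G. cyl G l \<subseteq> S p})"
    proof
      show "S p \<subseteq> \<Union> (cyl G ` {l \<in> mor G. cyl G l \<subseteq> S p})"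
      proof
        fix y assume y: "y \<in> S p"
        then have yp: "y \<in> paths G" and ye: "y m (padd m p) = y n (padd n p)" unfolding S_def by auto
        have l: "y zero_deg T \<in> mor G" "deg G (y zero_deg T) = T" using path_mor[OF yp] path_deg[OF yp] by auto
        have "y \<in> cyl G (y zero_deg T)" using yp l unfolding cyl_def by auto
        moreover have "cyl G (y zero_deg T) \<subseteq> S p"
        proof
          fix x assume x: "x \<in> cyl G (y zero_deg T)"
          then have xp: "x \<in> paths G" and xe: "x zero_deg T = y zero_deg T" using l unfolding cyl_def by auto
          have "x m (padd m p) = y m (padd m p)" "x n (padd n p) = y n (padd n p)"
            using path_agree[OF xp yp xe _ le1(1)] path_agree[OF xp yp xe _ le1(2)] by auto
          then show "x \<in> S p" using xp ye unfolding S_def by simp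
        qed
        ultimately show "y \<in> \<Union> (cyl G ` {l \<in> mor G. cyl G l \<subseteq> S p})" using l by blast
      qed
    qed blast
    also have "\<dots> \<in> sets M"
      apply (rule sets.countable_Union)
      using countable_mor cyl_sets by auto
    finally show ?thesis .
  qed
  then show ?thesis unfolding E by (intro sets.countable_INT) auto
qed

lemma back_path: assumes u: "u \<in> verts G" shows "\<exists>\<kappa>\<in>mor G. src G \<kappa> = u \<and> deg G \<kappa> = b"
proof -
  have um: "u \<in> mor G" and ud: "deg G u = zero_deg" using verts_mor[OF u] by auto
  obtain x where x: "x \<in> cyl G u" using cyl_ne[OF um] by blast
  have xp: "x \<in> paths G" and xe: "x zero_deg zero_deg = u" using x ud unfolding cyl_def by auto
  let ?g = "x zero_deg b"
  have g: "?g \<in> mor G" "deg G ?g = b" "rng G ?g = u" using path_mor[OF xp] path_deg[OF xp] path_rng[OF xp] xe by auto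
  have "src G ?g \<in> verts G" using src_vert[OF g(1)] .
  then obtain \<beta> where be: "\<beta> \<in> mor G" "rng G \<beta> = src G ?g" "src G \<beta> = u"
    using sc u unfolding strongly_connected_def by blast
  have gm: "cmp G ?g \<beta> \<in> mor G" using cmp_mor[OF g(1) be(1)] be by simp
  have "deg G (cmp G ?g \<beta>) = padd (deg G \<beta>) b" using deg_cmp[OF g(1) be(1)] be g padd_comm by metis
  then obtain k1 k2 where k: "k1 \<in> mor G" "k2 \<in> mor G" "src G k1 = rng G k2" "deg G k2 = b"
    "cmp G ?g \<beta> = cmp G k1 k2" using fact_ex[OF gm] by blast
  have "src G k2 = u" using src_cmp[OF k(1,2,3)] src_cmp[OF g(1) be(1)] be k(5) by metis
  then show ?thesis using k by blast
qed

lemma case_zero: assumes y: "y \<in> paths G" and ne: "shift m y \<noteq> shift n y"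
  shows "measure M {x \<in> paths G. shift m x = shift n x} = 0"
proof -
  define E where "E = {x \<in> paths G. shift m x = shift n x}"
  have Es: "E \<in> sets M" unfolding E_def by (rule E_sets)
  define Bad where "Bad l = (\<forall>x\<in>cyl G l. shift m x \<noteq> shift n x)" for l
  obtain lam where lam: "lam \<in> mor G" "Bad lam" using bad[OF y ne] unfolding Bad_def by blast
  have "\<forall>v\<in>verts G. \<exists>\<nu>. \<nu> \<in> mor G \<and> rng G \<nu> = v \<and> Bad \<nu>"
  proof
    fix v assume v: "v \<in> verts G"
    obtain a where a: "a \<in> mor G" "rng G a = v" "src G a = rng G lam"
      using sc v rng_vert[OF lam(1)] unfolding strongly_connected_def by blast
    show "\<exists>\<nu>. \<nu> \<in> mor G \<and> rng G \<nu> = v \<and> Bad \<nu>"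
      apply (rule exI[of _ "cmp G a lam"])
      using cmp_mor[OF a(1) lam(1) a(3)] rng_cmp[OF a(1) lam(1) a(3)] a
        bad_cmp[OF lam(2)[unfolded Bad_def] a(1) lam(1) a(3)] unfolding Bad_def by auto
  qed
  then obtain f where f: "\<And>v. v \<in> verts G \<Longrightarrow> f v \<in> mor G \<and> rng G (f v) = v \<and> Bad (f v)"
    by metis
  define r where "r v = measure M (cyl G (f v)) / measure M (cyl G v)" for v
  define c where "c = Min (r ` verts G)"
  have vne: "verts G \<noteq> {}" using exists_pos by blast
  have rpos: "r v > 0" if "v \<in> verts G" for v
    unfolding r_def using cyl_pos f[OF that] verts_pos[OF that] by auto
  have sub: "cyl G (f v) \<subseteq> cyl G v" if v: "v \<in> verts G" for v
  proof
    have fv: "f v \<in> mor G" "rng G (f v) = v" using f[OF v] by auto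
    have vm: "v \<in> mor G" using verts_mor[OF v] by simp
    fix x assume "x \<in> cyl G (f v)"
    then have "x \<in> cyl G (cmp G v (f v))" using cmp_rng[OF fv(1)] fv by simp
    then show "x \<in> cyl G v" using cyl_cmp[OF vm fv(1)] deg0_id[of v] verts_mor[OF v] fv by auto
  qed
  have rle: "r v \<le> 1" if v: "v \<in> verts G" for v
  proof -
    have "measure M (cyl G (f v)) \<le> measure M (cyl G v)"
      using finite_measure_mono[OF sub[OF v] cyl_sets] verts_mor[OF v] by blast
    then show ?thesis unfolding r_def using verts_pos[OF v] by simp
  qed
  have cle: "c \<le> r v" if "v \<in> verts G" for v unfolding c_def using verts_finite that by simp
  have cpos: "c > 0" unfolding c_def using verts_finite vne rpos by simp
  have c1: "c \<le> 1" using cle rle vne by (meson equals0I order_trans)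
  have main: "\<forall>\<mu>\<in>mor G. measure M (E \<inter> cyl G \<mu>) \<le> (1 - c) ^ j * measure M (cyl G \<mu>)" for j
  proof (induction j)
    case 0
    show ?case using finite_measure_mono[OF Int_lower2 cyl_sets] by simp
  next
    case (Suc j)
    show ?case
    proof
      fix \<mu> assume mu: "\<mu> \<in> mor G"
      define v where "v = src G \<mu>"
      have v: "v \<in> verts G" unfolding v_def using src_vert[OF mu] .
      define \<nu> where "\<nu> = f v"
      have nu: "\<nu> \<in> mor G" "rng G \<nu> = v" "Bad \<nu>" using f[OF v] unfolding \<nu>_def by auto
      define Ns where "Ns = N \<mu> (deg G \<nu>)"
      have nuN: "\<nu> \<in> Ns" unfolding Ns_def N_def using nu v_def by auto
      have Nf: "finite Ns" unfolding Ns_def using N_finite[OF fin] .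
      have Nm: "\<And>a. a \<in> Ns \<Longrightarrow> cmp G \<mu> a \<in> mor G"
        unfolding Ns_def N_def using cmp_mor[OF mu] by auto
      have badmn: "Bad (cmp G \<mu> \<nu>)"
        using bad_cmp[OF nu(3)[unfolded Bad_def] mu nu(1)] nu v_def unfolding Bad_def by auto
      have "E \<inter> cyl G \<mu> \<subseteq> (\<Union>a\<in>Ns - {\<nu>}. E \<inter> cyl G (cmp G \<mu> a))"
      proof
        fix x assume x: "x \<in> E \<inter> cyl G \<mu>"
        then obtain a where a: "a \<in> Ns" "x \<in> cyl G (cmp G \<mu> a)"
          using cyl_decomp[OF mu, of "deg G \<nu>"] unfolding Ns_def by blast
        have "a \<noteq> \<nu>" using a badmn x unfolding Bad_def E_def by auto
        then show "x \<in> (\<Union>a\<in>Ns - {\<nu>}. E \<inter> cyl G (cmp G \<mu> a))" using a x by blast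
      qed
      then have "measure M (E \<inter> cyl G \<mu>) \<le> measure M (\<Union>a\<in>Ns - {\<nu>}. E \<inter> cyl G (cmp G \<mu> a))"
        apply (rule finite_measure_mono)
        using Nf Nm Es cyl_sets by (intro sets.finite_UN) auto
      also have "\<dots> \<le> (\<Sum>a\<in>Ns - {\<nu>}. measure M (E \<inter> cyl G (cmp G \<mu> a)))"
        apply (rule finite_measure_subadditive_finite)
        using Nf Nm Es cyl_sets by auto
      also have "\<dots> \<le> (\<Sum>a\<in>Ns - {\<nu>}. (1 - c) ^ j * measure M (cyl G (cmp G \<mu> a)))"
        apply (rule sum_mono) using Suc.IH Nm by blast
      also have "\<dots> = (1 - c) ^ j * (\<Sum>a\<in>Ns - {\<nu>}. measure M (cyl G (cmp G \<mu> a)))"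
        by (simp add: sum_distrib_left)
      also have "(\<Sum>a\<in>Ns - {\<nu>}. measure M (cyl G (cmp G \<mu> a))) =
          measure M (cyl G \<mu>) - measure M (cyl G (cmp G \<mu> \<nu>))"
        using sum_diff1[OF Nf, of "\<lambda>a. measure M (cyl G (cmp G \<mu> a))" \<nu>] nuN meas_sum[OF mu, of "deg G \<nu>"]
        unfolding Ns_def by simp
      also have "measure M (cyl G (cmp G \<mu> \<nu>)) \<ge> c * measure M (cyl G \<mu>)"
      proof -
        have e: "measure M (cyl G (cmp G \<mu> \<nu>)) * measure M (cyl G v) =
            measure M (cyl G \<mu>) * measure M (cyl G \<nu>)"
          using meas_cmp[OF mu nu(1)] nu v_def by simp
        have vp: "measure M (cyl G v) > 0" using verts_pos[OF v] .
        have "c * measure M (cyl G v) \<le> measure M (cyl G \<nu>)"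
          using cle[OF v] vp unfolding r_def \<nu>_def by (simp add: pos_le_divide_eq)
        then have "measure M (cyl G \<mu>) * (c * measure M (cyl G v)) \<le> measure M (cyl G \<mu>) * measure M (cyl G \<nu>)"
          using measure_nonneg[of M "cyl G \<mu>"] by (rule mult_left_mono)
        then have "(c * measure M (cyl G \<mu>)) * measure M (cyl G v) \<le> measure M (cyl G (cmp G \<mu> \<nu>)) * measure M (cyl G v)"
          using e by (simp add: algebra_simps)
        then show ?thesis using vp by (rule mult_right_le_imp_le)
      qed
      then have "(1 - c) ^ j * (measure M (cyl G \<mu>) - measure M (cyl G (cmp G \<mu> \<nu>)))
          \<le> (1 - c) ^ j * (measure M (cyl G \<mu>) - c * measure M (cyl G \<mu>))"
        using c1 by (intro mult_left_mono) auto
      also have "\<dots> = (1 - c) ^ Suc j * measure M (cyl G \<mu>)" by (simp add: algebra_simps)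
      finally show "measure M (E \<inter> cyl G \<mu>) \<le> (1 - c) ^ Suc j * measure M (cyl G \<mu>)" .
    qed
  qed
  have zero: "measure M (E \<inter> cyl G v) = 0" if v: "v \<in> verts G" for v
  proof -
    have vm: "v \<in> mor G" using verts_mor[OF v] by simp
    have lim: "(\<lambda>j. (1 - c) ^ j * measure M (cyl G v)) \<longlonglongrightarrow> 0 * measure M (cyl G v)"
      by (intro tendsto_mult tendsto_const LIMSEQ_power_zero) (use cpos c1 in auto)
    have "measure M (E \<inter> cyl G v) \<le> 0"
      using LIMSEQ_le_const[OF lim] main vm by auto
    then show ?thesis using measure_nonneg[of M "E \<inter> cyl G v"] by linarith
  qed
  have Eeq: "E = (\<Union>v\<in>verts G. E \<inter> cyl G v)" using paths_union unfolding E_def by auto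
  have "measure M E = measure M (\<Union>v\<in>verts G. E \<inter> cyl G v)" using Eeq by (rule arg_cong)
  moreover have "(\<lambda>v. E \<inter> cyl G v) ` verts G \<subseteq> sets M"
    using Es cyl_sets verts_mor by blast
  ultimately have "measure M E \<le> (\<Sum>v\<in>verts G. measure M (E \<inter> cyl G v))"
    using finite_measure_subadditive_finite[OF verts_finite, of "\<lambda>v. E \<inter> cyl G v"]
    by (metis (no_types, lifting))
  also have "\<dots> = 0" using zero by simp
  finally show ?thesis using measure_nonneg[of M E] unfolding E_def by linarith
qed

end

context kgm begin

lemma per_all: assumes d: "(\<lambda>i. int (m i) - int (n i)) = (\<lambda>i. int (m' i) - int (n' i))"
  and P: "\<forall>x\<in>paths G. shift m' x = shift n' x"
  shows "\<forall>y\<in>paths G. shift m y = shift n y"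
proof (rule ccontr)
  assume "\<not> ?thesis"
  then obtain y where y: "y \<in> paths G" "shift m y \<noteq> shift n y" by blast
  obtain lam where lam: "lam \<in> mor G" "\<forall>x\<in>cyl G lam. shift m x \<noteq> shift n x" using bad[OF y] by blast
  define b where "b = (\<lambda>i. max (m i) (m' i) - m i)"
  define a where "a = (\<lambda>i. max (m i) (m' i) - m' i)"
  obtain k where k: "k \<in> mor G" "src G k = rng G lam" "deg G k = b"
    using back_path[OF rng_vert[OF lam(1)]] by blast
  obtain x where x: "x \<in> cyl G (cmp G k lam)" using cyl_ne cmp_mor[OF k(1) lam(1) k(2)] by blast
  have "shift b x \<in> cyl G lam" using cyl_cmp[OF k(1) lam(1) k(2) x] k(3) by simp
  then have ne: "shift (padd b m) x \<noteq> shift (padd b n) x" using lam(2) shift_shift by metis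
  have e1: "padd b m = padd m' a" unfolding padd_def a_def b_def by auto
  have e2: "padd b n = padd n' a"
  proof
    fix i
    have "int (m i) - int (n i) = int (m' i) - int (n' i)" using d by metis
    then show "padd b n i = padd n' a i" unfolding padd_def a_def b_def by auto
  qed
  have xp: "x \<in> paths G" using x unfolding cyl_def by blast
  have "shift (padd m' a) x = shift (padd n' a) x"
    by (metis P xp shift_shift)
  then show False using ne e1 e2 by simp
qed

end

theorem proposition8p2:
  fixes G :: "('a, 'k::finite) kgraph"
    and M :: "(('k \<Rightarrow> nat) \<Rightarrow> ('k \<Rightarrow> nat) \<Rightarrow> 'a) measure"
    and m n :: "'k \<Rightarrow> nat"
  assumes "k_graph G" and "standing G" and "finite_kgraph G" and "strongly_connected G"
    and "prob_space M"
    and "space M = paths G" and "sets M = sets (path_borel G)"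
    and "\<forall>l\<in>mor G. measure M (cyl G l) = inverse (rho_pow G (deg G l)) * xLam G (src G l)"
  shows "{x \<in> paths G. shift m x = shift n x} \<in> sets M \<and>
         measure M {x \<in> paths G. shift m x = shift n x} =
           (if (\<lambda>i. int (m i) - int (n i)) \<in> Per G then 1 else 0)"
proof -
  interpret kgm G M
    using assms by (simp add: kgm_def kgr_def kgm_axioms_def)
  have Es: "{x \<in> paths G. shift m x = shift n x} \<in> sets M" by (rule E_sets)
  show ?thesis
  proof (cases "\<exists>y\<in>paths G. shift m y \<noteq> shift n y")
    case True
    have "(\<lambda>i. int (m i) - int (n i)) \<notin> Per G"
    proof
      assume "(\<lambda>i. int (m i) - int (n i)) \<in> Per G"
      then obtain m' n' where "(\<lambda>i. int (m i) - int (n i)) = (\<lambda>i. int (m' i) - int (n' i))"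
        "\<forall>x\<in>paths G. shift m' x = shift n' x" unfolding Per_def by blast
      then have "\<forall>y\<in>paths G. shift m y = shift n y" by (rule per_all)
      then show False using True by blast
    qed
    then show ?thesis using Es case_zero True by auto
  next
    case False
    then have "{x \<in> paths G. shift m x = shift n x} = space M" using sp by auto
    moreover have "(\<lambda>i. int (m i) - int (n i)) \<in> Per G" unfolding Per_def using False by blast
    ultimately show ?thesis using Es prob_space by simp
  qed
qed

end
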